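(* Let $0<p<1$ and let $X_p$ be a $\mathbb{P}^1(\mathbb{R})$-valued random variable satisfying the distributional identity $X_p \sim \frac{1}{X_p}+\epsilon_p$, where $\epsilon_p\sim\mathrm{Bernoulli}(p)$ is independent of $X_p$. Then \[ 0<\mathbb{E}[\log X_p]<\infty \qquad\text{and}\qquad \mathbb{E}[\log X_p]=\frac{p}{3}\,\mathbb{E}\big[\log(2X_p+1)\big]. \]
   Context: $\mathbb{P}^1(\mathbb{R})$ is identified with $\mathbb{R}\cup\{\infty\}$ (with $1/0=\infty$, $1/\infty=0$, $\infty+1=\infty$). $\epsilon_p\sim\mathrm{Bernoulli}(p)$ means $\mathbb{P}(\epsilon_p=1)=p$, $\mathbb{P}(\epsilon_p=0)=1-p$. The matrices $Y=\begin{pmatrix}\epsilon_p&1\\1&0\end{pmatrix}$ act on $\mathbb{P}^1(\mathbb{R})$ by $\begin{pmatrix}a&b\\c&d\end{pmatrix}\cdot x=\frac{ax+b}{cx+d}$; the distributional identity says the law of $X_p$ is invariant under this random action. The law of such $X_p$ is unique, atomless, and $X_p\in(0,\infty)$ almost surely; moreover $\mathbb{E}[\log X_p]=\lambda(p)$, the top Lyapunov exponent $\lambda(p)=\lim_{n\to\infty}\frac1n\mathbb{E}\log\|Y_n\cdots Y_1\|$ of i.i.d. copies $Y_i$ of $Y$, which satisfies $0<\lambda(p)<\infty$. *)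

theory Defs
  imports "HOL-Probability.Probability"
begin

text \<open>The projective line P^1(R) = R \<union> {\<infinity>} is modelled inside the extended reals
  (type ereal), using only the finite values and the point PInfty; the value MInfty is
  excluded by hypothesis.  On these points ereal's inverse satisfies 1/0 = \<infinity>,
  1/\<infinity> = 0 and \<infinity> + 1 = \<infinity>, as required.\<close>

definition p1_valued :: "ereal \<Rightarrow> bool" where
  "p1_valued x \<longleftrightarrow> x \<noteq> -\<infinity>"

definition inv_shift :: "real \<Rightarrow> ereal \<Rightarrow> ereal" where
  "inv_shift e x = inverse x + ereal e"

end

theory Submission
  imports Defs
begin


lemma rneg: "(r::real) < 0 \<Longrightarrow> 1/r < 0" by simp
lemma rneg_ge: "(r::real) < 0 \<Longrightarrow> (-1 \<le> 1/r) = (r \<le> -1)" by (simp add: field_simps)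
lemma rneg_le: "(r::real) < 0 \<Longrightarrow> (1/r \<le> -1) = (-1 \<le> r)" by (simp add: field_simps)
lemma rpos_gt: "(r::real) > 0 \<Longrightarrow> 0 < t \<Longrightarrow> (t < 1/r) = (r < 1/t)" by (simp add: field_simps)

lemma h1: "r<0 \<Longrightarrow> 0<t \<Longrightarrow> \<not> 1 < r*(t::real)" using mult_neg_pos[of r t] by linarith
lemma h2: "r<0 \<Longrightarrow> 1<t \<Longrightarrow> \<not> r + 1 < r*(t::real)" proof - assume a: "r<0" "1<t" have "r*(t-1)<0" using a by (intro mult_neg_pos) auto thus ?thesis unfolding right_diff_distrib by linarith qed
lemma h3: "1 \<le> u \<Longrightarrow> 0 < r \<Longrightarrow> \<not> u + r*u < (r::real)" proof - assume a: "1 \<le> u" "0 < r" have "r*1 \<le> r*u" using a by (intro mult_left_mono) auto thus ?thesis using a by linarith qed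
lemma inv_fin: "r \<noteq> 0 \<Longrightarrow> inverse (ereal r) = ereal (1/r)" by (simp add: inverse_eq_divide)
lemma inv1_fin: "r \<noteq> 0 \<Longrightarrow> inverse (ereal r) + 1 = ereal (1/r + 1)" by (simp add: inverse_eq_divide one_ereal_def)

lemma ecases: assumes "(x::ereal) \<noteq> -\<infinity>"
  obtains (pinf) "x = \<infinity>" | (zero) "x = 0" | (pos) r where "x = ereal r" "r > 0" | (neg) r where "x = ereal r" "r < 0"
  using assms by (cases x) (auto, metis linorder_neqE_linordered_idom)


lemma inv_ge0: "(x::ereal) \<noteq> -\<infinity> \<Longrightarrow> (0 \<le> inverse x) = (0 \<le> x)"
  by (cases x rule: ecases) (auto simp: inv_fin inv1_fin one_ereal_def field_simps h1 h2 h3)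
lemma inv1_ge0: "(x::ereal) \<noteq> -\<infinity> \<Longrightarrow> (0 \<le> inverse x + 1) = (0 \<le> x \<or> x \<le> -1)"
  by (cases x rule: ecases) (auto simp: inv_fin inv1_fin one_ereal_def field_simps h1 h2 h3)
lemma inv_le_m1: "(x::ereal) \<noteq> -\<infinity> \<Longrightarrow> (inverse x \<le> -1) = (-1 \<le> x \<and> x < 0)"
  by (cases x rule: ecases) (auto simp: inv_fin inv1_fin one_ereal_def field_simps h1 h2 h3)
lemma inv_inf: "(x::ereal) \<noteq> -\<infinity> \<Longrightarrow> (inverse x = \<infinity>) = (x = 0)"
  by (cases x) auto
lemma inv1_inf: "(x::ereal) \<noteq> -\<infinity> \<Longrightarrow> (inverse x + 1 = \<infinity>) = (x = 0)"
  by (cases x) (auto simp: one_ereal_def)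
lemma inv_0: "(x::ereal) \<noteq> -\<infinity> \<Longrightarrow> (inverse x = 0) = (x = \<infinity>)"
  by (cases x) auto
lemma inv1_0: "(x::ereal) \<noteq> -\<infinity> \<Longrightarrow> (inverse x + 1 = 0) = (x = -1)"
  by (cases x rule: ecases) (auto simp: inv_fin inv1_fin one_ereal_def field_simps h1 h2 h3)
lemma inv_gt: "(x::ereal) \<noteq> -\<infinity> \<Longrightarrow> 0 < t \<Longrightarrow> (ereal t < inverse x) = (0 \<le> x \<and> x < ereal (1/t))"
  by (cases x rule: ecases) (auto simp: inv_fin inv1_fin one_ereal_def field_simps h1 h2 h3)
lemma inv1_gt: "(x::ereal) \<noteq> -\<infinity> \<Longrightarrow> 1 < t \<Longrightarrow> (ereal t < inverse x + 1) = (0 \<le> x \<and> x < ereal (1/(t-1)))"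
  by (cases x rule: ecases) (auto simp: inv_fin inv1_fin one_ereal_def field_simps h1 h2 h3)
lemma inv_small: "(x::ereal) \<noteq> -\<infinity> \<Longrightarrow> 0 < u \<Longrightarrow> (0 \<le> inverse x \<and> inverse x < ereal (1/u)) = (ereal u < x)"
  by (cases x rule: ecases) (auto simp: inv_fin inv1_fin one_ereal_def field_simps h1 h2 h3)
lemma inv1_small: "(x::ereal) \<noteq> -\<infinity> \<Longrightarrow> 1 \<le> u \<Longrightarrow> 0 \<le> inverse x + 1 \<Longrightarrow> inverse x + 1 < ereal (1/u) \<Longrightarrow> x < 0"
  by (cases x rule: ecases) (auto simp: inv_fin inv1_fin one_ereal_def field_simps h1 h2 h3)



locale lset = prob_space M for M :: "'a measure" +
  fixes X :: "'a \<Rightarrow> ereal" and eps :: "'a \<Rightarrow> real" and p :: real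
  assumes p0: "0 < p" and p1: "p < 1"
    and Xm[measurable]: "X \<in> borel_measurable M"
    and Xfin: "\<forall>\<omega>\<in>space M. X \<omega> \<noteq> -\<infinity>"
    and em[measurable]: "eps \<in> borel_measurable M"
    and e01: "\<forall>\<omega>\<in>space M. eps \<omega> = 0 \<or> eps \<omega> = 1"
    and pe: "measure M {\<omega>\<in>space M. eps \<omega> = 1} = p"
    and ind: "indep_var borel X borel (\<lambda>\<omega>. ereal (eps \<omega>))"
    and dis: "distr M borel X = distr M borel (\<lambda>\<omega>. inv_shift (eps \<omega>) (X \<omega>))"
begin

lemma Tm[measurable]: "(\<lambda>\<omega>. inv_shift (eps \<omega>) (X \<omega>)) \<in> borel_measurable M"
  unfolding inv_shift_def by measurable

lemma int_eps: "integrable M eps" "(\<integral>\<omega>. eps \<omega> \<partial>M) = p"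
proof -
  define S where "S = {\<omega>\<in>space M. eps \<omega> = 1}"
  have eq: "eps \<omega> = indicator S \<omega>" if "\<omega> \<in> space M" for \<omega>
  proof -
    have "eps \<omega> = 0 \<or> eps \<omega> = 1" using e01 that by blast
    then show ?thesis using that unfolding S_def indicator_def by auto
  qed
  have "AE x in M. norm (eps x) \<le> 1"
  proof (rule AE_I2)
    fix x assume "x \<in> space M" hence "eps x = 0 \<or> eps x = 1" using e01 by blast
    thus "norm (eps x) \<le> 1" by auto
  qed
  then show "integrable M eps" using em by (rule integrable_const_bound)
  have "(\<integral>\<omega>. eps \<omega> \<partial>M) = (\<integral>\<omega>. indicator S \<omega> \<partial>M)"
    by (rule Bochner_Integration.integral_cong[OF refl eq])
  also have "\<dots> = measure M (S \<inter> space M)" by (rule Bochner_Integration.integral_indicator)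
  also have "S \<inter> space M = S" unfolding S_def by blast
  finally show "(\<integral>\<omega>. eps \<omega> \<partial>M) = p" using pe unfolding S_def by simp
qed

lemma E_split:
  fixes g :: "ereal \<Rightarrow> real"
  assumes g[measurable]: "g \<in> borel_measurable borel"
    and i0: "integrable M (\<lambda>\<omega>. g (inverse (X \<omega>)))"
    and i1: "integrable M (\<lambda>\<omega>. g (inverse (X \<omega>) + 1))"
  shows "integrable M (\<lambda>\<omega>. g (X \<omega>))"
    "(\<integral>\<omega>. g (X \<omega>) \<partial>M) = (1-p) * (\<integral>\<omega>. g (inverse (X \<omega>)) \<partial>M) + p * (\<integral>\<omega>. g (inverse (X \<omega>) + 1) \<partial>M)"
proof -
  let ?T = "\<lambda>\<omega>. inv_shift (eps \<omega>) (X \<omega>)"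
  have ind0: "indep_var borel (\<lambda>\<omega>. g (inverse (X \<omega>))) borel (\<lambda>\<omega>. 1 - eps \<omega>)"
    using indep_var_compose[OF ind, of "\<lambda>x. g (inverse x)" borel "\<lambda>e. 1 - real_of_ereal e" borel]
    by (simp add: comp_def)
  have ind1: "indep_var borel (\<lambda>\<omega>. g (inverse (X \<omega>) + 1)) borel (\<lambda>\<omega>. eps \<omega>)"
    using indep_var_compose[OF ind, of "\<lambda>x. g (inverse x + 1)" borel "\<lambda>e. real_of_ereal e" borel]
    by (simp add: comp_def)
  have ie1: "integrable M (\<lambda>\<omega>. 1 - eps \<omega>)" using int_eps by auto
  have ie2: "(\<integral>\<omega>. 1 - eps \<omega> \<partial>M) = 1 - p" using int_eps by (simp add: prob_space)
  have pw: "\<And>\<omega>. \<omega> \<in> space M \<Longrightarrow> g (?T \<omega>) = g (inverse (X \<omega>)) * (1 - eps \<omega>) + g (inverse (X \<omega>) + 1) * eps \<omega>"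
    using e01 by (auto simp: inv_shift_def one_ereal_def)
  have a0: "integrable M (\<lambda>\<omega>. g (inverse (X \<omega>)) * (1 - eps \<omega>))"
    by (rule indep_var_integrable[OF ind0 i0 ie1])
  have a1: "integrable M (\<lambda>\<omega>. g (inverse (X \<omega>) + 1) * eps \<omega>)"
    by (rule indep_var_integrable[OF ind1 i1 int_eps(1)])
  have iT: "integrable M (\<lambda>\<omega>. g (?T \<omega>))"
    using Bochner_Integration.integrable_add[OF a0 a1] by (rule integrable_cong_AE_imp) (auto intro!: AE_I2 simp: pw)
  have "integrable (distr M borel ?T) g" using iT by (subst integrable_distr_eq) auto
  then have "integrable (distr M borel X) g" using dis by simp
  then show "integrable M (\<lambda>\<omega>. g (X \<omega>))" by (subst (asm) integrable_distr_eq) auto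
  have "(\<integral>\<omega>. g (X \<omega>) \<partial>M) = integral\<^sup>L (distr M borel X) g" by (subst integral_distr) auto
  also have "\<dots> = integral\<^sup>L (distr M borel ?T) g" using dis by simp
  also have "\<dots> = (\<integral>\<omega>. g (?T \<omega>) \<partial>M)" by (subst integral_distr) auto
  also have "\<dots> = (\<integral>\<omega>. g (inverse (X \<omega>)) * (1 - eps \<omega>) + g (inverse (X \<omega>) + 1) * eps \<omega> \<partial>M)"
    using pw by (intro Bochner_Integration.integral_cong) auto
  also have "\<dots> = (\<integral>\<omega>. g (inverse (X \<omega>)) * (1 - eps \<omega>) \<partial>M) + (\<integral>\<omega>. g (inverse (X \<omega>) + 1) * eps \<omega> \<partial>M)"
    using a0 a1 by simp
  also have "\<dots> = (1-p) * (\<integral>\<omega>. g (inverse (X \<omega>)) \<partial>M) + p * (\<integral>\<omega>. g (inverse (X \<omega>) + 1) \<partial>M)"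
    by (simp add: indep_var_lebesgue_integral[OF ind0 i0 ie1] indep_var_lebesgue_integral[OF ind1 i1 int_eps(1)] ie2 int_eps(2))
  finally show "(\<integral>\<omega>. g (X \<omega>) \<partial>M) = (1-p) * (\<integral>\<omega>. g (inverse (X \<omega>)) \<partial>M) + p * (\<integral>\<omega>. g (inverse (X \<omega>) + 1) \<partial>M)" .
qed

lemma prob_int: "{\<omega>\<in>space M. R \<omega>} \<in> sets M \<Longrightarrow> prob {\<omega>\<in>space M. R \<omega>} = (\<integral>\<omega>. (if R \<omega> then 1 else 0) \<partial>M)"
proof -
  assume s: "{\<omega>\<in>space M. R \<omega>} \<in> sets M"
  have "(\<integral>\<omega>. (if R \<omega> then 1 else 0) \<partial>M) = (\<integral>\<omega>. indicator {\<omega>\<in>space M. R \<omega>} \<omega> \<partial>M)"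
    by (intro Bochner_Integration.integral_cong) (auto simp: indicator_def)
  also have "\<dots> = prob {\<omega>\<in>space M. R \<omega>}" using s by simp
  finally show ?thesis by simp
qed

lemma K:
  assumes Q[measurable]: "Measurable.pred borel Q"
  shows "prob {\<omega>\<in>space M. Q (X \<omega>)} = (1-p) * prob {\<omega>\<in>space M. Q (inverse (X \<omega>))} + p * prob {\<omega>\<in>space M. Q (inverse (X \<omega>) + 1)}"
proof -
  let ?g = "\<lambda>x. if Q x then 1 else (0::real)"
  have gm: "?g \<in> borel_measurable borel" by measurable
  have ib: "integrable M (\<lambda>\<omega>. ?g (f \<omega>))" if fm[measurable]: "f \<in> borel_measurable M" for f
    apply (rule integrable_const_bound[where B=1])
     apply (rule AE_I2) apply simp
    apply measurable done
  have e: "(\<integral>\<omega>. ?g (X \<omega>) \<partial>M) = (1-p) * (\<integral>\<omega>. ?g (inverse (X \<omega>)) \<partial>M) + p * (\<integral>\<omega>. ?g (inverse (X \<omega>) + 1) \<partial>M)"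
    by (rule E_split(2)[OF gm ib ib]; measurable)
  show ?thesis using e by (simp add: prob_int)
qed

end


context lset begin

lemma ee1: "\<not> (0 \<le> (x::ereal) \<and> x \<le> -1)" by (cases x) (auto simp: one_ereal_def)
lemma ee2: "\<not> ((x::ereal) < -1 \<and> (-1 \<le> x \<and> x < 0))" by (cases x) (auto simp: one_ereal_def)
lemma ee3: "(x::ereal) \<noteq> -\<infinity> \<Longrightarrow> (x < 0) = (x < -1 \<or> (-1 \<le> x \<and> x < 0))" by (cases x) (auto simp: one_ereal_def)

lemma pcong: "(\<And>x. x \<noteq> -\<infinity> \<Longrightarrow> A x = B x) \<Longrightarrow> prob {\<omega>\<in>space M. A (X \<omega>)} = prob {\<omega>\<in>space M. B (X \<omega>)}"
  using Xfin by (intro arg_cong[where f=prob]) auto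

lemma pnn: "prob {\<omega>\<in>space M. A \<omega>} \<ge> 0" by simp

lemma punion: assumes [measurable]: "Measurable.pred borel A" "Measurable.pred borel B"
  and "\<And>x. \<not> (A x \<and> B x)"
  shows "prob {\<omega>\<in>space M. A (X \<omega>) \<or> B (X \<omega>)} = prob {\<omega>\<in>space M. A (X \<omega>)} + prob {\<omega>\<in>space M. B (X \<omega>)}"
proof -
  have "{\<omega>\<in>space M. A (X \<omega>) \<or> B (X \<omega>)} = {\<omega>\<in>space M. A (X \<omega>)} \<union> {\<omega>\<in>space M. B (X \<omega>)}" by auto
  moreover have "prob ({\<omega>\<in>space M. A (X \<omega>)} \<union> {\<omega>\<in>space M. B (X \<omega>)}) = prob {\<omega>\<in>space M. A (X \<omega>)} + prob {\<omega>\<in>space M. B (X \<omega>)}"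
    using assms(3) by (intro finite_measure_Union) auto
  ultimately show ?thesis by simp
qed

lemma pmono: assumes [measurable]: "Measurable.pred borel B" and "\<And>x. x \<noteq> -\<infinity> \<Longrightarrow> A x \<Longrightarrow> B x"
  shows "prob {\<omega>\<in>space M. A (X \<omega>)} \<le> prob {\<omega>\<in>space M. B (X \<omega>)}"
  using assms(2) Xfin by (intro finite_measure_mono) auto

lemma le_m1: "prob {\<omega>\<in>space M. X \<omega> \<le> -1} = 0"
proof -
  have "prob {\<omega>\<in>space M. 0 \<le> X \<omega>} = (1-p) * prob {\<omega>\<in>space M. 0 \<le> inverse (X \<omega>)} + p * prob {\<omega>\<in>space M. 0 \<le> inverse (X \<omega>) + 1}"
    by (rule K) measurable
  also have "prob {\<omega>\<in>space M. 0 \<le> inverse (X \<omega>)} = prob {\<omega>\<in>space M. 0 \<le> X \<omega>}"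
    by (rule pcong) (rule inv_ge0)
  also have "prob {\<omega>\<in>space M. 0 \<le> inverse (X \<omega>) + 1} = prob {\<omega>\<in>space M. 0 \<le> X \<omega> \<or> X \<omega> \<le> -1}"
    by (rule pcong) (rule inv1_ge0)
  also have "\<dots> = prob {\<omega>\<in>space M. 0 \<le> X \<omega>} + prob {\<omega>\<in>space M. X \<omega> \<le> -1}"
    by (rule punion) (measurable, use ee1 in blast)
  finally have "p * prob {\<omega>\<in>space M. X \<omega> \<le> -1} = 0" by (simp add: algebra_simps)
  then show ?thesis using p0 by simp
qed

lemma neg0: "prob {\<omega>\<in>space M. X \<omega> < 0} = 0"
proof -
  have "prob {\<omega>\<in>space M. X \<omega> \<le> -1} = (1-p) * prob {\<omega>\<in>space M. inverse (X \<omega>) \<le> -1} + p * prob {\<omega>\<in>space M. inverse (X \<omega>) + 1 \<le> -1}"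
    by (rule K) measurable
  also have "prob {\<omega>\<in>space M. inverse (X \<omega>) \<le> -1} = prob {\<omega>\<in>space M. -1 \<le> X \<omega> \<and> X \<omega> < 0}"
    by (rule pcong) (rule inv_le_m1)
  finally have "(1-p) * prob {\<omega>\<in>space M. -1 \<le> X \<omega> \<and> X \<omega> < 0} \<le> 0"
    using le_m1 p1 p0 pnn[of "\<lambda>\<omega>. inverse (X \<omega>) + 1 \<le> -1"] by (smt (verit) mult_nonneg_nonneg)
  then have a: "prob {\<omega>\<in>space M. -1 \<le> X \<omega> \<and> X \<omega> < 0} = 0"
    using p1 pnn[of "\<lambda>\<omega>. -1 \<le> X \<omega> \<and> X \<omega> < 0"] by (smt (verit) mult_pos_pos)
  have b: "prob {\<omega>\<in>space M. X \<omega> < -1} = 0"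
    using pmono[of "\<lambda>x. x \<le> -1" "\<lambda>x. x < -1"] le_m1 pnn[of "\<lambda>\<omega>. X \<omega> < -1"] by simp
  have "prob {\<omega>\<in>space M. X \<omega> < 0} = prob {\<omega>\<in>space M. X \<omega> < -1 \<or> (-1 \<le> X \<omega> \<and> X \<omega> < 0)}"
    by (rule pcong) (rule ee3)
  also have "\<dots> = 0" using a b by (subst punion) (measurable, use ee2 in blast, simp)
  finally show ?thesis .
qed

lemma inf0: "prob {\<omega>\<in>space M. X \<omega> = 0} = 0" "prob {\<omega>\<in>space M. X \<omega> = \<infinity>} = 0"
proof -
  have "prob {\<omega>\<in>space M. X \<omega> = \<infinity>} = (1-p) * prob {\<omega>\<in>space M. inverse (X \<omega>) = \<infinity>} + p * prob {\<omega>\<in>space M. inverse (X \<omega>) + 1 = \<infinity>}"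
    by (rule K) measurable
  also have "prob {\<omega>\<in>space M. inverse (X \<omega>) = \<infinity>} = prob {\<omega>\<in>space M. X \<omega> = 0}"
    by (rule pcong) (rule inv_inf)
  also have "prob {\<omega>\<in>space M. inverse (X \<omega>) + 1 = \<infinity>} = prob {\<omega>\<in>space M. X \<omega> = 0}"
    by (rule pcong) (rule inv1_inf)
  finally have e1: "prob {\<omega>\<in>space M. X \<omega> = \<infinity>} = prob {\<omega>\<in>space M. X \<omega> = 0}" by (simp add: algebra_simps)
  have "prob {\<omega>\<in>space M. X \<omega> = 0} = (1-p) * prob {\<omega>\<in>space M. inverse (X \<omega>) = 0} + p * prob {\<omega>\<in>space M. inverse (X \<omega>) + 1 = 0}"
    by (rule K) measurable
  also have "prob {\<omega>\<in>space M. inverse (X \<omega>) = 0} = prob {\<omega>\<in>space M. X \<omega> = \<infinity>}"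
    by (rule pcong) (rule inv_0)
  also have "prob {\<omega>\<in>space M. inverse (X \<omega>) + 1 = 0} = prob {\<omega>\<in>space M. X \<omega> = -1}"
    by (rule pcong) (rule inv1_0)
  also have "prob {\<omega>\<in>space M. X \<omega> = -1} = 0"
    using pmono[of "\<lambda>x. x < 0" "\<lambda>x. x = -1"] neg0 pnn[of "\<lambda>\<omega>. X \<omega> = -1"] by simp
  finally have "p * prob {\<omega>\<in>space M. X \<omega> = 0} = 0" using e1 by (simp add: algebra_simps)
  then show "prob {\<omega>\<in>space M. X \<omega> = 0} = 0" using p0 by simp
  then show "prob {\<omega>\<in>space M. X \<omega> = \<infinity>} = 0" using e1 by simp
qed

lemma AEpos: "AE \<omega> in M. 0 < X \<omega> \<and> X \<omega> < \<infinity>"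
proof -
  have "AE \<omega> in M. \<omega> \<notin> {\<omega>\<in>space M. X \<omega> < 0}" using neg0 by (subst prob_eq_0[symmetric]) auto
  moreover have "AE \<omega> in M. \<omega> \<notin> {\<omega>\<in>space M. X \<omega> = 0}" using inf0 by (subst prob_eq_0[symmetric]) auto
  moreover have "AE \<omega> in M. \<omega> \<notin> {\<omega>\<in>space M. X \<omega> = \<infinity>}" using inf0 by (subst prob_eq_0[symmetric]) auto
  moreover have "AE \<omega> in M. \<omega> \<in> space M" by (rule AE_space)
  ultimately show ?thesis
  proof eventually_elim
    case (elim \<omega>)
    then show ?case by (auto simp: not_less less_le less_top[symmetric])
  qed
qed

end



lemma cnt: assumes "1 \<le> (y::real)" shows "ennreal (ln y) \<le> (\<Sum>n. if real n + 1 < y then 1 else 0 :: ennreal)"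
proof -
  define k where "k = nat \<lceil>y\<rceil> - 1"
  have c1: "y \<le> real_of_int \<lceil>y\<rceil>" "real_of_int \<lceil>y\<rceil> < y + 1" by linarith+
  have c2: "1 \<le> \<lceil>y\<rceil>" using assms c1 by linarith
  have n1: "1 \<le> nat \<lceil>y\<rceil>" using c2 by linarith
  have n2: "real (nat \<lceil>y\<rceil>) = real_of_int \<lceil>y\<rceil>" using c2 by simp
  have rk: "real k = real_of_int \<lceil>y\<rceil> - 1" unfolding k_def using n1 n2 by (simp add: of_nat_diff)
  have k1: "ln y \<le> real k" using ln_le_minus_one[of y] assms rk c1 by linarith
  have k2: "real n + 1 < y" if "n < k" for n
  proof -
    have "real n + 1 \<le> real k" using that by simp
    thus ?thesis using rk c1 by linarith
  qed
  have "ennreal (ln y) \<le> ennreal (real k)" using k1 by (rule ennreal_leI)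
  also have "\<dots> = (\<Sum>n<k. 1::ennreal)" by (simp add: ennreal_of_nat_eq_real_of_nat)
  also have "\<dots> = (\<Sum>n<k. if real n + 1 < y then 1 else 0 :: ennreal)" using k2 by (intro sum.cong) auto
  also have "\<dots> \<le> (\<Sum>n. if real n + 1 < y then 1 else 0 :: ennreal)" by (intro sum_le_suminf) auto
  finally show ?thesis .
qed

lemma cnt2: assumes "0 < (x::real)"
  shows "ennreal \<bar>ln x\<bar> \<le> (\<Sum>n. if real n + 1 < x then 1 else 0 :: ennreal) + (\<Sum>n. if x < 1 / (real n + 1) then 1 else 0 :: ennreal)"
proof (cases "1 \<le> x")
  case True
  then have "ennreal \<bar>ln x\<bar> = ennreal (ln x)" by simp
  also have "\<dots> \<le> (\<Sum>n. if real n + 1 < x then 1 else 0 :: ennreal)" using True by (rule cnt)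
  also have "\<dots> \<le> (\<Sum>n. if real n + 1 < x then 1 else 0 :: ennreal) + (\<Sum>n. if x < 1 / (real n + 1) then 1 else 0 :: ennreal)"
    by (rule add_increasing2) auto
  finally show ?thesis .
next
  case False
  then have y: "1 \<le> 1/x" using assms by (simp add: field_simps)
  have "\<bar>ln x\<bar> = ln (1/x)" using False assms by (simp add: ln_div)
  then have "ennreal \<bar>ln x\<bar> = ennreal (ln (1/x))" by simp
  also have "\<dots> \<le> (\<Sum>n. if real n + 1 < 1/x then 1 else 0 :: ennreal)" using y by (rule cnt)
  also have "(\<lambda>n. if real n + 1 < 1/x then 1 else 0 :: ennreal) = (\<lambda>n. if x < 1 / (real n + 1) then 1 else 0)"
    using assms by (intro ext) (simp add: field_simps)
  also have "(\<Sum>n. if x < 1 / (real n + 1) then 1 else 0 :: ennreal) \<le> (\<Sum>n. if real n + 1 < x then 1 else 0 :: ennreal) + (\<Sum>n. if x < 1 / (real n + 1) then 1 else 0 :: ennreal)"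
    by (rule add_increasing) auto
  finally show ?thesis .
qed

context lset begin

definition G where "G t = prob {\<omega>\<in>space M. ereal t < X \<omega>}"

lemma low: assumes "1 \<le> u" shows "prob {\<omega>\<in>space M. 0 \<le> X \<omega> \<and> X \<omega> < ereal (1/u)} = (1-p) * G u"
proof -
  have "prob {\<omega>\<in>space M. 0 \<le> X \<omega> \<and> X \<omega> < ereal (1/u)} = (1-p) * prob {\<omega>\<in>space M. 0 \<le> inverse (X \<omega>) \<and> inverse (X \<omega>) < ereal (1/u)}
     + p * prob {\<omega>\<in>space M. 0 \<le> inverse (X \<omega>) + 1 \<and> inverse (X \<omega>) + 1 < ereal (1/u)}"
    by (rule K) measurable
  also have "prob {\<omega>\<in>space M. 0 \<le> inverse (X \<omega>) \<and> inverse (X \<omega>) < ereal (1/u)} = G u"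
    unfolding G_def using assms by (intro pcong inv_small) auto
  also have "prob {\<omega>\<in>space M. 0 \<le> inverse (X \<omega>) + 1 \<and> inverse (X \<omega>) + 1 < ereal (1/u)} = 0"
  proof -
    have "prob {\<omega>\<in>space M. 0 \<le> inverse (X \<omega>) + 1 \<and> inverse (X \<omega>) + 1 < ereal (1/u)} \<le> prob {\<omega>\<in>space M. X \<omega> < 0}"
      using assms by (intro pmono) (measurable, auto intro: inv1_small)
    then show ?thesis using neg0 pnn[of "\<lambda>\<omega>. 0 \<le> inverse (X \<omega>) + 1 \<and> inverse (X \<omega>) + 1 < ereal (1/u)"] by linarith
  qed
  finally show ?thesis by simp
qed

lemma Gnn: "0 \<le> G t" "G t \<le> 1" unfolding G_def by auto

lemma tail: assumes "2 \<le> t" shows "G t = (1-p)/(2-p) * G (t-1)"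
proof -
  have "G t = (1-p) * prob {\<omega>\<in>space M. ereal t < inverse (X \<omega>)} + p * prob {\<omega>\<in>space M. ereal t < inverse (X \<omega>) + 1}"
    unfolding G_def by (rule K) measurable
  also have "prob {\<omega>\<in>space M. ereal t < inverse (X \<omega>)} = prob {\<omega>\<in>space M. 0 \<le> X \<omega> \<and> X \<omega> < ereal (1/t)}"
    using assms by (intro pcong inv_gt) auto
  also have "prob {\<omega>\<in>space M. ereal t < inverse (X \<omega>) + 1} = prob {\<omega>\<in>space M. 0 \<le> X \<omega> \<and> X \<omega> < ereal (1/(t-1))}"
    using assms by (intro pcong inv1_gt) auto
  also have "prob {\<omega>\<in>space M. 0 \<le> X \<omega> \<and> X \<omega> < ereal (1/t)} = (1-p) * G t" using assms by (intro low) auto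
  also have "prob {\<omega>\<in>space M. 0 \<le> X \<omega> \<and> X \<omega> < ereal (1/(t-1))} = (1-p) * G (t-1)" using assms by (intro low) auto
  finally have e: "G t = (1-p) * ((1-p) * G t) + p * ((1-p) * G (t-1))" .
  have "p * ((2-p) * G t - (1-p) * G (t-1)) = G t - ((1-p) * ((1-p) * G t) + p * ((1-p) * G (t-1)))"
    by algebra
  also have "\<dots> = 0" using e by simp
  finally have "(2-p) * G t = (1-p) * G (t-1)" using p0 by simp
  then show ?thesis using p1 by (simp add: field_simps)
qed

lemma geo: "G (real n + 1) \<le> ((1-p)/(2-p))^n"
proof (induction n)
  case 0
  then show ?case using Gnn by simp
next
  case (Suc n)
  have "G (real (Suc n) + 1) = (1-p)/(2-p) * G (real (Suc n) + 1 - 1)" by (rule tail) simp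
  also have "real (Suc n) + 1 - 1 = real n + 1" by simp
  also have "(1-p)/(2-p) * G (real n + 1) \<le> (1-p)/(2-p) * ((1-p)/(2-p))^n"
    using Suc p0 p1 by (intro mult_left_mono) auto
  finally show ?case by simp
qed

end


context lset begin

lemma ilog: "integrable M (\<lambda>\<omega>. ln (real_of_ereal (X \<omega>)))"
proof (rule integrableI_bounded)
  show "(\<lambda>\<omega>. ln (real_of_ereal (X \<omega>))) \<in> borel_measurable M" by measurable
  define r where "r = (1-p)/(2-p)"
  have r0: "0 \<le> r" "r < 1" unfolding r_def using p0 p1 by (auto simp: field_simps)
  define A where "A n = {\<omega>\<in>space M. ereal (real n + 1) < X \<omega>}" for n :: nat
  define B where "B n = {\<omega>\<in>space M. 0 \<le> X \<omega> \<and> X \<omega> < ereal (1 / (real n + 1))}" for n :: nat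
  have Am[measurable]: "A n \<in> sets M" for n unfolding A_def by measurable
  have Bm[measurable]: "B n \<in> sets M" for n unfolding B_def by measurable
  have "(\<integral>\<^sup>+\<omega>. ennreal (norm (ln (real_of_ereal (X \<omega>)))) \<partial>M)
      \<le> (\<integral>\<^sup>+\<omega>. (\<Sum>n. indicator (A n) \<omega>) + (\<Sum>n. indicator (B n) \<omega>) \<partial>M)"
  proof (rule nn_integral_mono_AE)
    have "AE \<omega> in M. \<omega> \<in> space M" by (rule AE_space)
    with AEpos show "AE \<omega> in M. ennreal (norm (ln (real_of_ereal (X \<omega>)))) \<le> (\<Sum>n. indicator (A n) \<omega>) + (\<Sum>n. indicator (B n) \<omega>)"
    proof eventually_elim
      case (elim \<omega>)
      then obtain x where x: "X \<omega> = ereal x" "0 < x" by (cases "X \<omega>") auto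
      have a: "(\<lambda>n. indicator (A n) \<omega>) = (\<lambda>n. if real n + 1 < x then 1 else 0 :: ennreal)"
        using elim x by (intro ext) (simp add: A_def indicator_def)
      have b: "(\<lambda>n. indicator (B n) \<omega>) = (\<lambda>n. if x < 1 / (real n + 1) then 1 else 0 :: ennreal)"
        using elim x by (intro ext) (simp add: B_def indicator_def)
      show ?case unfolding a b using cnt2[OF x(2)] x by simp
    qed
  qed
  also have "\<dots> = (\<Sum>n. emeasure M (A n)) + (\<Sum>n. emeasure M (B n))"
    by (subst nn_integral_add) (measurable, simp add: nn_integral_suminf)
  also have "\<dots> \<le> (\<Sum>n. ennreal (r^n)) + (\<Sum>n. ennreal (r^n))"
  proof (intro add_mono suminf_le)
    fix n
    have "emeasure M (A n) = ennreal (G (real n + 1))" unfolding A_def G_def by (simp add: emeasure_eq_measure)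
    also have "\<dots> \<le> ennreal (r^n)" using geo[of n] unfolding r_def by (rule ennreal_leI)
    finally show "emeasure M (A n) \<le> ennreal (r^n)" .
    have "emeasure M (B n) = ennreal ((1-p) * G (real n + 1))" unfolding B_def by (simp add: emeasure_eq_measure low)
    also have "\<dots> \<le> ennreal (r^n)"
    proof (rule ennreal_leI)
      have "(1-p) * G (real n + 1) \<le> 1 * G (real n + 1)" using Gnn p0 by (intro mult_right_mono) auto
      then show "(1-p) * G (real n + 1) \<le> r^n" using geo[of n] unfolding r_def by linarith
    qed
    finally show "emeasure M (B n) \<le> ennreal (r^n)" .
  qed auto
  also have "\<dots> < \<infinity>"
  proof -
    have "(\<Sum>n. ennreal (r^n)) = ennreal (\<Sum>n. r^n)" using r0 by (intro suminf_ennreal2) (auto intro: summable_geometric)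
    then show ?thesis by (simp add: ennreal_plus[symmetric] del: ennreal_plus)
  qed
  finally show "(\<integral>\<^sup>+\<omega>. ennreal (norm (ln (real_of_ereal (X \<omega>)))) \<partial>M) < \<infinity>" .
qed

lemma ln_bound: assumes x: "0 < (x::real)" and c: "0 < c" "c \<le> 2"
  shows "\<bar>ln (c * x + 1)\<bar> \<le> \<bar>\<bar>ln x\<bar> + ln 3\<bar>"
proof -
  have "0 < c * x" using x c by simp
  then have pos: "0 < ln (c * x + 1)" by (intro ln_gt_zero) simp
  have l3: "0 < ln (3::real)" by simp
  have cx: "c * x \<le> 2 * x" using c x by (intro mult_right_mono) auto
  have "ln (c * x + 1) \<le> \<bar>ln x\<bar> + ln 3"
  proof (cases "1 \<le> x")
    case True
    have "c * x + 1 \<le> 3 * x" using True cx by linarith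
    then have "ln (c * x + 1) \<le> ln (3 * x)" using x c by (intro ln_mono) (auto simp: add_pos_nonneg)
    also have "\<dots> = ln 3 + ln x" using x by (simp add: ln_mult)
    finally show ?thesis by linarith
  next
    case False
    have "c * x + 1 \<le> 3" using False cx by linarith
    then have "ln (c * x + 1) \<le> ln 3" using x c by (intro ln_mono) (auto simp: add_pos_nonneg)
    then show ?thesis by linarith
  qed
  then show ?thesis using pos l3 by linarith
qed

lemma ilog2: assumes "0 < c" "c \<le> 2" shows "integrable M (\<lambda>\<omega>. ln (c * real_of_ereal (X \<omega>) + 1))"
proof (rule Bochner_Integration.integrable_bound)
  show "integrable M (\<lambda>\<omega>. \<bar>ln (real_of_ereal (X \<omega>))\<bar> + ln 3)"
    using ilog by auto
  show "(\<lambda>\<omega>. ln (c * real_of_ereal (X \<omega>) + 1)) \<in> borel_measurable M" by measurable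
  show "AE \<omega> in M. norm (ln (c * real_of_ereal (X \<omega>) + 1)) \<le> norm (\<bar>ln (real_of_ereal (X \<omega>))\<bar> + ln 3)"
    using AEpos
  proof eventually_elim
    case (elim \<omega>)
    then obtain x where x: "X \<omega> = ereal x" "0 < x" by (cases "X \<omega>") auto
    show ?case using ln_bound[OF x(2) assms] x by simp
  qed
qed

end


context lset begin

lemma AEx: assumes "\<And>x. 0 < x \<Longrightarrow> f (ereal x) = h x"
  shows "AE \<omega> in M. f (X \<omega>) = h (real_of_ereal (X \<omega>))"
  using AEpos
proof eventually_elim
  case (elim \<omega>)
  then obtain x where x: "X \<omega> = ereal x" "0 < x" by (cases "X \<omega>") auto
  then show ?case using assms by simp
qed

lemma pw1: "0 < x \<Longrightarrow> ln (1 / x) = - ln (x::real)" by (simp add: ln_div)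
lemma pw2: "0 < x \<Longrightarrow> ln (1 / x + 1) = ln (x + 1) - ln (x::real)"
proof -
  assume x: "0 < x"
  have "1 / x + 1 = (x + 1) / x" using x by (simp add: field_simps)
  then show ?thesis using x by (simp add: ln_div)
qed
lemma pw3: "0 < x \<Longrightarrow> ln (2 + 1 / x) = ln (2 * x + 1) - ln (x::real)"
proof -
  assume x: "0 < x"
  have "2 + 1 / x = (2 * x + 1) / x" using x by (simp add: field_simps)
  then show ?thesis using x by (simp add: ln_div)
qed

lemma main_identity:
  "(\<integral>\<omega>. ln (real_of_ereal (X \<omega>)) \<partial>M) = p / 3 * (\<integral>\<omega>. ln (2 * real_of_ereal (X \<omega>) + 1) \<partial>M)"
proof -
  define L where "L = (\<integral>\<omega>. ln (real_of_ereal (X \<omega>)) \<partial>M)"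
  define A where "A = (\<integral>\<omega>. ln (real_of_ereal (X \<omega>) + 1) \<partial>M)"
  define B where "B = (\<integral>\<omega>. ln (2 * real_of_ereal (X \<omega>) + 1) \<partial>M)"
  have iL: "integrable M (\<lambda>\<omega>. ln (real_of_ereal (X \<omega>)))" by (rule ilog)
  have iA: "integrable M (\<lambda>\<omega>. ln (real_of_ereal (X \<omega>) + 1))" using ilog2[of 1] by simp
  have iB: "integrable M (\<lambda>\<omega>. ln (2 * real_of_ereal (X \<omega>) + 1))" using ilog2[of 2] by simp
  have a1: "AE \<omega> in M. ln (real_of_ereal (inverse (X \<omega>))) = - ln (real_of_ereal (X \<omega>))"
    by (rule AEx[of "\<lambda>y. ln (real_of_ereal (inverse y))" "\<lambda>x. - ln x"]) (simp add: inv_fin ln_inverse)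
  have a2: "AE \<omega> in M. ln (real_of_ereal (inverse (X \<omega>) + 1)) = ln (real_of_ereal (X \<omega>) + 1) - ln (real_of_ereal (X \<omega>))"
    by (rule AEx[of "\<lambda>y. ln (real_of_ereal (inverse y + 1))" "\<lambda>x. ln (x + 1) - ln x"]) (simp add: inv1_fin pw2 inverse_eq_divide)
  have j0: "integrable M (\<lambda>\<omega>. ln (real_of_ereal (inverse (X \<omega>))))"
    by (rule integrable_cong_AE_imp[OF integrable_minus[OF iL]]) (measurable, use a1 in \<open>auto elim: AE_mp\<close>)
  have j1: "integrable M (\<lambda>\<omega>. ln (real_of_ereal (inverse (X \<omega>) + 1)))"
    by (rule integrable_cong_AE_imp[OF Bochner_Integration.integrable_diff[OF iA iL]]) (measurable, use a2 in \<open>auto elim: AE_mp\<close>)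
  have "L = (1-p) * (\<integral>\<omega>. ln (real_of_ereal (inverse (X \<omega>))) \<partial>M) + p * (\<integral>\<omega>. ln (real_of_ereal (inverse (X \<omega>) + 1)) \<partial>M)"
    unfolding L_def by (rule E_split(2)[of "\<lambda>x. ln (real_of_ereal x)", OF _ j0 j1]) measurable
  also have "(\<integral>\<omega>. ln (real_of_ereal (inverse (X \<omega>))) \<partial>M) = (\<integral>\<omega>. - ln (real_of_ereal (X \<omega>)) \<partial>M)"
    by (rule integral_cong_AE) (measurable, rule a1)
  also have "\<dots> = - L" unfolding L_def by simp
  also have "(\<integral>\<omega>. ln (real_of_ereal (inverse (X \<omega>) + 1)) \<partial>M) = (\<integral>\<omega>. ln (real_of_ereal (X \<omega>) + 1) - ln (real_of_ereal (X \<omega>)) \<partial>M)"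
    by (rule integral_cong_AE) (measurable, rule a2)
  also have "\<dots> = A - L" unfolding A_def L_def using iA iL by simp
  finally have e1: "L = (1-p) * (- L) + p * (A - L)" .
  have b1: "AE \<omega> in M. ln (real_of_ereal (inverse (X \<omega>)) + 1) = ln (real_of_ereal (X \<omega>) + 1) - ln (real_of_ereal (X \<omega>))"
    by (rule AEx[of "\<lambda>y. ln (real_of_ereal (inverse y) + 1)" "\<lambda>x. ln (x + 1) - ln x"]) (simp add: inv_fin pw2 inverse_eq_divide)
  have b2: "AE \<omega> in M. ln (real_of_ereal (inverse (X \<omega>) + 1) + 1) = ln (2 * real_of_ereal (X \<omega>) + 1) - ln (real_of_ereal (X \<omega>))"
    by (rule AEx[of "\<lambda>y. ln (real_of_ereal (inverse y + 1) + 1)" "\<lambda>x. ln (2 * x + 1) - ln x"]) (simp add: inv1_fin pw3 inverse_eq_divide)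
  have k0: "integrable M (\<lambda>\<omega>. ln (real_of_ereal (inverse (X \<omega>)) + 1))"
    by (rule integrable_cong_AE_imp[OF Bochner_Integration.integrable_diff[OF iA iL]]) (measurable, use b1 in \<open>auto elim: AE_mp\<close>)
  have k1: "integrable M (\<lambda>\<omega>. ln (real_of_ereal (inverse (X \<omega>) + 1) + 1))"
    by (rule integrable_cong_AE_imp[OF Bochner_Integration.integrable_diff[OF iB iL]]) (measurable, use b2 in \<open>auto elim: AE_mp\<close>)
  have "A = (1-p) * (\<integral>\<omega>. ln (real_of_ereal (inverse (X \<omega>)) + 1) \<partial>M) + p * (\<integral>\<omega>. ln (real_of_ereal (inverse (X \<omega>) + 1) + 1) \<partial>M)"
    unfolding A_def by (rule E_split(2)[of "\<lambda>x. ln (real_of_ereal x + 1)", OF _ k0 k1]) measurable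
  also have "(\<integral>\<omega>. ln (real_of_ereal (inverse (X \<omega>)) + 1) \<partial>M) = (\<integral>\<omega>. ln (real_of_ereal (X \<omega>) + 1) - ln (real_of_ereal (X \<omega>)) \<partial>M)"
    by (rule integral_cong_AE) (measurable, rule b1)
  also have "\<dots> = A - L" unfolding A_def L_def using iA iL by simp
  also have "(\<integral>\<omega>. ln (real_of_ereal (inverse (X \<omega>) + 1) + 1) \<partial>M) = (\<integral>\<omega>. ln (2 * real_of_ereal (X \<omega>) + 1) - ln (real_of_ereal (X \<omega>)) \<partial>M)"
    by (rule integral_cong_AE) (measurable, rule b2)
  also have "\<dots> = B - L" unfolding B_def L_def using iB iL by simp
  finally have e2: "A = (1-p) * (A - L) + p * (B - L)" .
  have "3 * L - p * B = (L - ((1-p) * (- L) + p * (A - L))) + (A - ((1-p) * (A - L) + p * (B - L)))"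
    by algebra
  also have "\<dots> = 0" using e1 e2 by simp
  finally have "3 * L = p * B" by simp
  then show ?thesis unfolding L_def B_def by simp
qed

lemma Bpos: "0 < (\<integral>\<omega>. ln (2 * real_of_ereal (X \<omega>) + 1) \<partial>M)"
proof -
  have iB: "integrable M (\<lambda>\<omega>. ln (2 * real_of_ereal (X \<omega>) + 1))" using ilog2[of 2] by simp
  have pos: "AE \<omega> in M. 0 < ln (2 * real_of_ereal (X \<omega>) + 1)"
    using AEpos
  proof eventually_elim
    case (elim \<omega>)
    then obtain x where x: "X \<omega> = ereal x" "0 < x" by (cases "X \<omega>") auto
    then show ?case by (intro ln_gt_zero) simp
  qed
  then have nn: "AE \<omega> in M. 0 \<le> ln (2 * real_of_ereal (X \<omega>) + 1)" by eventually_elim simp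
  have ge: "0 \<le> (\<integral>\<omega>. ln (2 * real_of_ereal (X \<omega>) + 1) \<partial>M)" using nn by (rule integral_nonneg_AE)
  have "(\<integral>\<omega>. ln (2 * real_of_ereal (X \<omega>) + 1) \<partial>M) \<noteq> 0"
  proof
    assume "(\<integral>\<omega>. ln (2 * real_of_ereal (X \<omega>) + 1) \<partial>M) = 0"
    then have "AE \<omega> in M. ln (2 * real_of_ereal (X \<omega>) + 1) = 0" using integral_nonneg_eq_0_iff_AE[OF iB nn] by simp
    with pos have "AE \<omega> in M. False" by eventually_elim simp
    then show False by simp
  qed
  with ge show ?thesis by simp
qed

end


theorem lemma3p1:
  fixes M :: "'a measure" and X :: "'a \<Rightarrow> ereal" and eps :: "'a \<Rightarrow> real" and p :: real
  assumes "prob_space M"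
    and "0 < p" and "p < 1"
    and "X \<in> borel_measurable M"
    and "\<forall>\<omega>\<in>space M. p1_valued (X \<omega>)"
    and "eps \<in> borel_measurable M"
    and "\<forall>\<omega>\<in>space M. eps \<omega> = 0 \<or> eps \<omega> = 1"
    and "measure M {\<omega>\<in>space M. eps \<omega> = 1} = p"
    and "prob_space.indep_var M borel X borel (\<lambda>\<omega>. ereal (eps \<omega>))"
    and "distr M borel X = distr M borel (\<lambda>\<omega>. inv_shift (eps \<omega>) (X \<omega>))"
  shows "(AE \<omega> in M. 0 < X \<omega> \<and> X \<omega> < \<infinity>)
    \<and> integrable M (\<lambda>\<omega>. ln (real_of_ereal (X \<omega>)))
    \<and> 0 < (\<integral>\<omega>. ln (real_of_ereal (X \<omega>)) \<partial>M)
    \<and> integrable M (\<lambda>\<omega>. ln (2 * real_of_ereal (X \<omega>) + 1))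
    \<and> (\<integral>\<omega>. ln (real_of_ereal (X \<omega>)) \<partial>M)
        = p / 3 * (\<integral>\<omega>. ln (2 * real_of_ereal (X \<omega>) + 1) \<partial>M)"
  proof -
  interpret l: lset M X eps p
    using assms by (simp add: lset_def lset_axioms_def p1_valued_def)
  have B: "0 < (\<integral>\<omega>. ln (2 * real_of_ereal (X \<omega>) + 1) \<partial>M)" by (rule l.Bpos)
  have L: "0 < p / 3 * (\<integral>\<omega>. ln (2 * real_of_ereal (X \<omega>) + 1) \<partial>M)"
    using B assms(2) by (intro mult_pos_pos) auto
  show ?thesis using l.AEpos l.ilog l.ilog2[of 2] l.main_identity L by simp
qed

end
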